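(* Let $(C,F)$ be an antler in an undirected multigraph $G$, and let $G':=G-(C\cup F)$ and $S:=C$. Then (i) for every minimum feedback vertex set $S'$ of $G'$, the set $S\cup S'$ is a minimum feedback vertex set of $G$; and (ii) for every integer $z\ge0$ and every $z$-antler $(\hat C,\hat F)$ in $G$, there exists a $z$-antler $(C',F')$ in $G'$ with $C'\cup F'=(\hat C\cup\hat F)\cap V(G')$ and $|C'|=|\hat C|-|(\hat C\cup\hat F)\cap S|$.
   Context: A feedback vertex set (FVS) of $G$ is a set $X\subseteq V(G)$ with $G-X$ acyclic (self-loops and pairs of parallel edges count as cycles); $\mathrm{fvs}(G)$ is its minimum size. For disjoint $X,Y$, $e(X,Y)$ is the number of edges between $X$ and $Y$. A feedback vertex cut (FVC) in $G$ is a pair of disjoint sets $C,F\subseteq V(G)$ such that $G[F]$ is a forest and every tree $T$ of $G[F]$ satisfies $e(V(T),V(G)\setminus(C\cup F))\le1$. An antler is a FVC $(C,F)$ with $|C|\le\mathrm{fvs}(G[C\cup F])$. For $C\subseteq V(G)$, a $C$-certificate is a subgraph $H$ of $G$ such that $C$ is a minimum FVS of $H$; it has order $z$ if every component $H'$ of $H$ satisfies $\mathrm{fvs}(H')=|C\cap V(H')|\le z$. A $z$-antler is an antler $(C,F)$ such that $G[C\cup F]$ contains a $C$-certificate of order $z$. *)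

theory Defs
  imports Main "HOL-Library.Multiset" "HOL-Library.Uprod"
begin

text \<open>A finite undirected multigraph: a vertex set together with a multiset of
unordered pairs of vertices (Upair v v is a self-loop; multiplicity > 1 means
parallel edges).\<close>

type_synonym 'a mgraph = "'a set \<times> 'a uprod multiset"

definition verts :: "'a mgraph \<Rightarrow> 'a set" where "verts G = fst G"
definition edges :: "'a mgraph \<Rightarrow> 'a uprod multiset" where "edges G = snd G"

definition mgraph :: "'a mgraph \<Rightarrow> bool" where
  "mgraph G \<longleftrightarrow> finite (verts G) \<and> (\<forall>e\<in>#edges G. set_uprod e \<subseteq> verts G)"

definition subgraph :: "'a mgraph \<Rightarrow> 'a mgraph \<Rightarrow> bool" where
  "subgraph H G \<longleftrightarrow> mgraph H \<and> verts H \<subseteq> verts G \<and> edges H \<subseteq># edges G"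

definition induced :: "'a mgraph \<Rightarrow> 'a set \<Rightarrow> 'a mgraph" where
  "induced G X = (verts G \<inter> X, filter_mset (\<lambda>e. set_uprod e \<subseteq> X) (edges G))"

definition del_verts :: "'a mgraph \<Rightarrow> 'a set \<Rightarrow> 'a mgraph" where
  "del_verts G X = induced G (verts G - X)"

definition has_cycle :: "'a mgraph \<Rightarrow> bool" where
  "has_cycle G \<longleftrightarrow>
     (\<exists>v. Upair v v \<in># edges G)
   \<or> (\<exists>u v. u \<noteq> v \<and> count (edges G) (Upair u v) \<ge> 2)
   \<or> (\<exists>vs. length vs \<ge> 3 \<and> distinct vs \<and> set vs \<subseteq> verts G \<and>
        (\<forall>i<length vs. Upair (vs ! i) (vs ! ((i + 1) mod length vs)) \<in># edges G))"

definition acyclic_mg :: "'a mgraph \<Rightarrow> bool" where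
  "acyclic_mg G \<longleftrightarrow> \<not> has_cycle G"

definition is_fvs :: "'a mgraph \<Rightarrow> 'a set \<Rightarrow> bool" where
  "is_fvs G X \<longleftrightarrow> X \<subseteq> verts G \<and> acyclic_mg (del_verts G X)"

definition fvs :: "'a mgraph \<Rightarrow> nat" where
  "fvs G = Min (card ` {X. is_fvs G X})"

definition is_min_fvs :: "'a mgraph \<Rightarrow> 'a set \<Rightarrow> bool" where
  "is_min_fvs G X \<longleftrightarrow> is_fvs G X \<and> card X = fvs G"

definition e_between :: "'a mgraph \<Rightarrow> 'a set \<Rightarrow> 'a set \<Rightarrow> nat" where
  "e_between G X Y = size (filter_mset (\<lambda>e. \<exists>x\<in>X. \<exists>y\<in>Y. e = Upair x y) (edges G))"

definition adj_rel :: "'a mgraph \<Rightarrow> ('a \<times> 'a) set" where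
  "adj_rel G = {(u, v). Upair u v \<in># edges G}"

definition component :: "'a mgraph \<Rightarrow> 'a \<Rightarrow> 'a set" where
  "component G v = {u. (v, u) \<in> (adj_rel G)\<^sup>*}"

text \<open>Feedback vertex cut: trees of G[F] are its connected components.\<close>
definition is_fvc :: "'a mgraph \<Rightarrow> 'a set \<Rightarrow> 'a set \<Rightarrow> bool" where
  "is_fvc G C F \<longleftrightarrow> C \<subseteq> verts G \<and> F \<subseteq> verts G \<and> C \<inter> F = {} \<and>
     acyclic_mg (induced G F) \<and>
     (\<forall>v\<in>F. e_between G (component (induced G F) v) (verts G - (C \<union> F)) \<le> 1)"

definition is_antler :: "'a mgraph \<Rightarrow> 'a set \<Rightarrow> 'a set \<Rightarrow> bool" where
  "is_antler G C F \<longleftrightarrow> is_fvc G C F \<and> card C \<le> fvs (induced G (C \<union> F))"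

definition is_certificate :: "'a mgraph \<Rightarrow> 'a set \<Rightarrow> 'a mgraph \<Rightarrow> bool" where
  "is_certificate G C H \<longleftrightarrow> subgraph H G \<and> is_min_fvs H C"

definition is_certificate_order :: "'a mgraph \<Rightarrow> 'a set \<Rightarrow> nat \<Rightarrow> 'a mgraph \<Rightarrow> bool" where
  "is_certificate_order G C z H \<longleftrightarrow> is_certificate G C H \<and>
     (\<forall>v\<in>verts H. let H' = induced H (component H v) in
        fvs H' = card (C \<inter> verts H') \<and> card (C \<inter> verts H') \<le> z)"

definition is_z_antler :: "'a mgraph \<Rightarrow> nat \<Rightarrow> 'a set \<Rightarrow> 'a set \<Rightarrow> bool" where
  "is_z_antler G z C F \<longleftrightarrow> is_antler G C F \<and>
     (\<exists>H. is_certificate_order (induced G (C \<union> F)) C z H)"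

end

theory Submission
  imports Defs
begin


lemma verts_induced[simp]: "verts (induced G X) = verts G \<inter> X"
  by (simp add: induced_def verts_def)
lemma edges_induced[simp]: "edges (induced G X) = filter_mset (\<lambda>e. set_uprod e \<subseteq> X) (edges G)"
  by (simp add: induced_def edges_def)
lemma induced_induced[simp]: "induced (induced G X) Y = induced G (X \<inter> Y)"
  by (simp add: induced_def verts_def edges_def filter_filter_mset Int_assoc conj_commute)
lemma del_verts_eq: "del_verts G X = induced G (verts G - X)"
  by (simp add: del_verts_def)
lemma mgraph_induced: "mgraph G \<Longrightarrow> mgraph (induced G X)"
  by (auto simp: mgraph_def)

lemma has_cycle_mono:
  assumes "has_cycle G1" "verts G1 \<subseteq> verts G2" "edges G1 \<subseteq># edges G2"
  shows "has_cycle G2"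
proof -
  have c: "count (edges G1) e \<le> count (edges G2) e" for e
    using assms(3) by (simp add: mset_subset_eq_count)
  have m: "e \<in># edges G1 \<Longrightarrow> e \<in># edges G2" for e using assms(3) by (meson mset_subset_eqD)
  show ?thesis using assms(1) unfolding has_cycle_def
    apply (elim disjE exE conjE)
    subgoal using m by blast
    subgoal for u v using c[of "Upair u v"] by (meson order_trans)
    subgoal for vs using m assms(2) by blast
    done
qed

lemma cyc_induced_mono: "has_cycle (induced G X) \<Longrightarrow> X \<subseteq> Y \<Longrightarrow> has_cycle (induced G Y)"
  by (erule has_cycle_mono) (auto intro!: filter_mset_mono_strong)

lemma no_cycle_empty: "\<not> has_cycle (induced G {})"
  by (auto simp: has_cycle_def)

lemma fvs_set_finite: "mgraph G \<Longrightarrow> finite {X. is_fvs G X}"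
  by (rule finite_subset[of _ "Pow (verts G)"]) (auto simp: is_fvs_def mgraph_def)

lemma fvs_univ: "is_fvs G (verts G)"
  by (simp add: is_fvs_def acyclic_mg_def del_verts_eq no_cycle_empty)

lemma fvs_le: "mgraph G \<Longrightarrow> is_fvs G X \<Longrightarrow> fvs G \<le> card X"
  unfolding fvs_def using fvs_set_finite[of G] by (auto intro: Min_le)

lemma fvs_ex: "mgraph G \<Longrightarrow> \<exists>X. is_fvs G X \<and> card X = fvs G"
proof -
  assume "mgraph G"
  then have "fvs G \<in> card ` {X. is_fvs G X}" unfolding fvs_def
    using fvs_set_finite[of G] fvs_univ[of G] by (intro Min_in) auto
  then show ?thesis by auto
qed

definition cyc_list :: "'a list \<Rightarrow> 'a uprod multiset \<Rightarrow> bool" where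
  "cyc_list vs E \<longleftrightarrow> length vs \<ge> 3 \<and> distinct vs \<and>
     (\<forall>i<length vs. Upair (vs ! i) (vs ! ((i + 1) mod length vs)) \<in># E)"

lemma has_cycle_alt: "has_cycle G \<longleftrightarrow>
     (\<exists>v. Upair v v \<in># edges G)
   \<or> (\<exists>u v. u \<noteq> v \<and> count (edges G) (Upair u v) \<ge> 2)
   \<or> (\<exists>vs. cyc_list vs (edges G) \<and> set vs \<subseteq> verts G)"
  unfolding has_cycle_def cyc_list_def by blast

lemma cyc_list_rotate:
  assumes "cyc_list vs E"
  shows "cyc_list (rotate m vs) E"
proof -
  let ?n = "length vs"
  have n: "?n \<ge> 3" using assms by (simp add: cyc_list_def)
  have "Upair (rotate m vs ! i) (rotate m vs ! ((i + 1) mod ?n)) \<in># E" if "i < ?n" for i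
  proof -
    have "(m + i) mod ?n < ?n" using n by (intro mod_less_divisor) linarith
    then have "Upair (vs ! ((m + i) mod ?n)) (vs ! (((m + i) mod ?n + 1) mod ?n)) \<in># E"
      using assms by (simp add: cyc_list_def)
    moreover have "((m + i) mod ?n + 1) mod ?n = (m + ((i + 1) mod ?n)) mod ?n"
      by (metis add.assoc mod_add_left_eq mod_add_right_eq)
    moreover have "(i + 1) mod ?n < ?n" using n by (intro mod_less_divisor) linarith
    ultimately show ?thesis using that n by (simp add: nth_rotate)
  qed
  then show ?thesis using assms by (simp add: cyc_list_def)
qed

lemma cyc_list_segment:
  assumes "cyc_list vs E" "vs ! 0 \<notin> F" "j < length vs" "vs ! j \<in> F"
  shows "\<exists>i k. 0 < i \<and> i \<le> k \<and> k < length vs \<and> vs ! (i - 1) \<notin> F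
     \<and> vs ! ((k + 1) mod length vs) \<notin> F \<and> (\<forall>l. i \<le> l \<and> l \<le> k \<longrightarrow> vs ! l \<in> F)"
proof -
  let ?n = "length vs"
  define i where "i = (LEAST i. i < ?n \<and> vs ! i \<in> F)"
  have i1: "i < ?n \<and> vs ! i \<in> F" unfolding i_def by (rule LeastI[where k=j]) (use assms(3,4) in simp)
  have i0: "0 < i" using i1 assms(2) by (cases i) auto
  have i2: "vs ! (i - 1) \<notin> F"
  proof
    assume "vs ! (i - 1) \<in> F"
    moreover have "i - 1 < ?n" using i1 by linarith
    ultimately have "i \<le> i - 1" unfolding i_def by (intro Least_le) simp
    then show False using i0 by simp
  qed
  define P where "P k \<longleftrightarrow> i \<le> k \<and> (k + 1 = ?n \<or> vs ! (k + 1) \<notin> F)" for k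
  define k where "k = (LEAST k. P k)"
  have "P (?n - 1)" unfolding P_def using i1 by auto
  then have k1: "P k" and k2: "k \<le> ?n - 1" unfolding k_def by (auto intro: LeastI Least_le)
  have kn: "k < ?n" using k2 i1 by linarith
  have mid: "vs ! l \<in> F" if "i \<le> l" "l \<le> k" for l
  proof (rule ccontr)
    assume nl: "vs ! l \<notin> F"
    then have "l \<noteq> i" using i1 by auto
    then have "P (l - 1)" unfolding P_def using that nl by auto
    then have "k \<le> l - 1" unfolding k_def by (rule Least_le)
    then show False using that \<open>l \<noteq> i\<close> by linarith
  qed
  have kF: "vs ! ((k + 1) mod ?n) \<notin> F"
  proof (cases "k + 1 = ?n")
    case True then show ?thesis using assms(2) by simp
  next
    case False then show ?thesis using k1 kn unfolding P_def by auto
  qed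
  show ?thesis using i0 k1 kn i2 kF mid unfolding P_def by blast
qed

lemma size_ge2: "e1 \<in># M \<Longrightarrow> e2 \<in># M \<Longrightarrow> e1 \<noteq> e2 \<Longrightarrow> 2 \<le> size M"
proof -
  assume a: "e1 \<in># M" "e2 \<in># M" "e1 \<noteq> e2"
  then have "e2 \<in># M - {#e1#}" by (simp add: in_diff_count)
  then have "size (M - {#e1#}) \<noteq> 0" by auto
  then have "1 \<le> size (M - {#e1#})" by linarith
  moreover have "size M = size (M - {#e1#}) + 1" using a(1)
    by (metis add.commute insert_DiffM size_add_mset plus_1_eq_Suc)
  ultimately show ?thesis by simp
qed

lemma fvc_cycle:
  assumes G: "mgraph G" and fvc: "is_fvc G C F" and H: "verts H \<subseteq> verts G" "edges H \<subseteq># edges G"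
    and cyc: "has_cycle (induced H X)" and XC: "X \<inter> C = {}"
  shows "has_cycle (induced H (X - F))"
proof -
  have acF: "\<not> has_cycle (induced G F)" using fvc by (simp add: is_fvc_def acyclic_mg_def)
  define T where "T v = component (induced G F) v" for v
  define Y where "Y = verts G - (C \<union> F)"
  define P where "P v e \<longleftrightarrow> (\<exists>x\<in>T v. \<exists>y\<in>Y. e = Upair x y)" for v e
  have hang: "size (filter_mset (P v) (edges G)) \<le> 1" if "v \<in> F" for v
    using fvc that unfolding is_fvc_def e_between_def P_def T_def Y_def by blast
  have vT: "v \<in> T v" for v by (simp add: T_def component_def)
  have HG: "e \<in># edges H \<Longrightarrow> e \<in># edges G" for e using H(2) by (meson mset_subset_eqD)
  have HGc: "count (edges H) e \<le> count (edges G) e" for e using H(2) by (simp add: mset_subset_eq_count)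
  have Gv: "set_uprod e \<subseteq> verts G" if "e \<in># edges G" for e using G that by (simp add: mgraph_def)
  show ?thesis using cyc[unfolded has_cycle_alt]
  proof (elim disjE exE conjE)
    fix v assume "Upair v v \<in># edges (induced H X)"
    then have e: "Upair v v \<in># edges H" "v \<in> X" by auto
    show ?thesis
    proof (cases "v \<in> F")
      case True
      then have "Upair v v \<in># edges (induced G F)" using HG e by simp
      then show ?thesis using acF by (auto simp: has_cycle_def)
    next
      case False
      then have "Upair v v \<in># edges (induced H (X - F))" using e by simp
      then show ?thesis by (auto simp: has_cycle_def)
    qed
  next
    fix u v assume uv: "u \<noteq> v" "2 \<le> count (edges (induced H X)) (Upair u v)"
    then have uvX: "u \<in> X" "v \<in> X" and cH: "2 \<le> count (edges H) (Upair u v)"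
      by (auto split: if_splits)
    then have cG: "2 \<le> count (edges G) (Upair u v)" using HGc order_trans by blast
    then have eG: "Upair u v \<in># edges G" by (metis count_eq_zero_iff not_numeral_le_zero)
    have bad: False if "a \<in> F" "b \<notin> F" "Upair a b = Upair u v" for a b
    proof -
      have "b \<in> verts G" using Gv[OF eG] that(3) by (metis insertCI set_uprod_simps subsetD)
      moreover have "b \<notin> C" using uvX XC that(3) by auto
      ultimately have "P a (Upair u v)" unfolding P_def Y_def using vT[of a] that by (metis DiffI UnE)
      then have "count (filter_mset (P a) (edges G)) (Upair u v) \<ge> 2" using cG by simp
      then have "size (filter_mset (P a) (edges G)) \<ge> 2" using count_le_size order_trans by metis
      then show False using hang[OF that(1)] by simp
    qed
    show ?thesis
    proof (cases "u \<in> F")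
      case True
      show ?thesis
      proof (cases "v \<in> F")
        case True
        then have "2 \<le> count (edges (induced G F)) (Upair u v)" using \<open>u \<in> F\<close> cG by simp
        then show ?thesis using acF uv(1) by (auto simp: has_cycle_def)
      next
        case False then show ?thesis using bad \<open>u \<in> F\<close> by blast
      qed
    next
      case False
      show ?thesis
      proof (cases "v \<in> F")
        case True then show ?thesis using bad[of v u] False by auto
      next
        case False
        then have "2 \<le> count (edges (induced H (X - F))) (Upair u v)" using \<open>u \<notin> F\<close> cH uvX by simp
        then show ?thesis using uv(1) unfolding has_cycle_def by blast
      qed
    qed
  next
    fix vs assume cl: "cyc_list vs (edges (induced H X))" and sv: "set vs \<subseteq> verts (induced H X)"
    let ?n = "length vs"
    have n3: "?n \<ge> 3" using cl by (simp add: cyc_list_def)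
    have edge: "Upair (vs ! i) (vs ! ((i + 1) mod ?n)) \<in># edges (induced H X)" if "i < ?n" for i
      using cl that by (simp add: cyc_list_def)
    have modn: "(i + 1) mod ?n < ?n" for i using n3 by (intro mod_less_divisor) linarith
    show ?thesis
    proof (cases "set vs \<inter> F = {}")
      case True
      have "cyc_list vs (edges (induced H (X - F)))" unfolding cyc_list_def
      proof (intro conjI allI impI)
        fix i assume i: "i < ?n"
        then have "vs ! i \<notin> F" "vs ! ((i + 1) mod ?n) \<notin> F" using True modn nth_mem by blast+
        then show "Upair (vs ! i) (vs ! ((i + 1) mod ?n)) \<in># edges (induced H (X - F))"
          using edge[OF i] by auto
      qed (use cl in \<open>auto simp: cyc_list_def\<close>)
      moreover have "set vs \<subseteq> verts (induced H (X - F))" using sv True by auto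
      ultimately show ?thesis unfolding has_cycle_alt by blast
    next
      case False
      show ?thesis
      proof (cases "set vs \<subseteq> F")
        case True
        have "cyc_list vs (edges (induced G F))" unfolding cyc_list_def
        proof (intro conjI allI impI)
          fix i assume i: "i < ?n"
          then have "vs ! i \<in> F" "vs ! ((i + 1) mod ?n) \<in> F" using True modn nth_mem by blast+
          then show "Upair (vs ! i) (vs ! ((i + 1) mod ?n)) \<in># edges (induced G F)"
            using edge[OF i] HG by auto
        qed (use cl in \<open>auto simp: cyc_list_def\<close>)
        moreover have "set vs \<subseteq> verts (induced G F)" using sv True H(1) by auto
        ultimately show ?thesis using acF unfolding has_cycle_alt by blast
      next
        case notsub: False
        then obtain p where p: "p < ?n" "vs ! p \<notin> F" by (metis in_set_conv_nth subsetI)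
        define ws where "ws = rotate p vs"
        have cw: "cyc_list ws (edges (induced H X))" unfolding ws_def by (rule cyc_list_rotate[OF cl])
        have lw: "length ws = ?n" and sw: "set ws = set vs" by (simp_all add: ws_def)
        have "ws ! 0 = vs ! ((p + 0) mod ?n)" unfolding ws_def using n3 by (intro nth_rotate) linarith
        then have w0: "ws ! 0 \<notin> F" using p by simp
        from False obtain q where q: "q < ?n" "ws ! q \<in> F" by (metis disjoint_iff in_set_conv_nth lw sw)
        obtain i k where ik: "0 < i" "i \<le> k" "k < ?n" "ws ! (i - 1) \<notin> F"
           "ws ! ((k + 1) mod ?n) \<notin> F" "\<And>l. i \<le> l \<Longrightarrow> l \<le> k \<Longrightarrow> ws ! l \<in> F"
          using cyc_list_segment[OF cw w0, of q] q lw by auto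
        have wedge: "Upair (ws ! l) (ws ! ((l + 1) mod ?n)) \<in># edges (induced H X)" if "l < ?n" for l
          using cw that lw by (simp add: cyc_list_def)
        have wX: "ws ! l \<in> X" "ws ! l \<in> verts G" if "l < ?n" for l
          using sv sw lw that nth_mem H(1) by fastforce+
        have reach: "ws ! (i + d) \<in> T (ws ! i)" if "i + d \<le> k" for d
          using that
        proof (induction d)
          case 0 then show ?case using vT by simp
        next
          case (Suc d)
          have l: "i + d + 1 < ?n" using Suc.prems ik(3) by linarith
          then have "(i + d + 1) mod ?n = i + d + 1" by simp
          then have "Upair (ws ! (i + d)) (ws ! (i + d + 1)) \<in># edges (induced H X)"
            using wedge[of "i + d"] l by simp
          moreover have "ws ! (i + d) \<in> F" "ws ! (i + d + 1) \<in> F" using ik(6) Suc.prems by auto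
          ultimately have "Upair (ws ! (i + d)) (ws ! (i + d + 1)) \<in># edges (induced G F)"
            using HG by auto
          then have "(ws ! (i + d), ws ! (i + d + 1)) \<in> adj_rel (induced G F)" by (simp add: adj_rel_def)
          then show ?case using Suc by (auto simp: T_def component_def intro: rtrancl_into_rtrancl)
        qed
        have kT: "ws ! k \<in> T (ws ! i)" using reach[of "k - i"] ik(2) by simp
        define e1 where "e1 = Upair (ws ! i) (ws ! (i - 1))"
        define e2 where "e2 = Upair (ws ! k) (ws ! ((k + 1) mod ?n))"
        have im: "(i - 1 + 1) mod ?n = i" using ik(1,2,3) by simp
        have "Upair (ws ! (i - 1)) (ws ! ((i - 1 + 1) mod ?n)) \<in># edges (induced H X)"
          using wedge[of "i - 1"] ik by linarith
        then have "Upair (ws ! (i - 1)) (ws ! i) \<in># edges H" unfolding im by simp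
        moreover have "e1 = Upair (ws ! (i - 1)) (ws ! i)" unfolding e1_def by simp
        ultimately have e1G: "e1 \<in># edges G" using HG by simp
        have e2G: "e2 \<in># edges G" using wedge[of k] ik HG unfolding e2_def by auto
        have dw: "distinct ws" using cw by (simp add: cyc_list_def)
        have "e1 \<noteq> e2"
        proof
          assume "e1 = e2"
          then have "ws ! i = ws ! k \<and> ws ! (i - 1) = ws ! ((k + 1) mod ?n)
             \<or> ws ! i = ws ! ((k + 1) mod ?n)" unfolding e1_def e2_def by auto
          moreover have "ws ! i \<noteq> ws ! ((k + 1) mod ?n)" using ik(2,5) ik(6)[of i] by auto
          ultimately have a: "ws ! i = ws ! k" "ws ! (i - 1) = ws ! ((k + 1) mod ?n)" by auto
          have "i = k" using a(1) dw ik lw by (simp add: nth_eq_iff_index_eq)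
          moreover have "i - 1 = (k + 1) mod ?n" using a(2) dw ik lw modn
            by (subst (asm) nth_eq_iff_index_eq) auto
          ultimately show False
          proof (cases "k + 1 < ?n")
            case True
            then show False using \<open>i = k\<close> \<open>i - 1 = (k + 1) mod ?n\<close> by simp
          next
            case False
            then have "k + 1 = ?n" using ik(3) by linarith
            then show False using \<open>i = k\<close> \<open>i - 1 = (k + 1) mod ?n\<close> ik(1) n3 by simp
          qed
        qed
        have notC: "ws ! l \<notin> C" if "l < ?n" for l using wX[OF that] XC by auto
        have "P (ws ! i) e1" unfolding P_def e1_def Y_def using vT wX[of "i - 1"] notC[of "i-1"] ik by fastforce
        moreover have "P (ws ! i) e2" unfolding P_def e2_def Y_def using kT wX[of "(k+1) mod ?n"]
            notC[of "(k+1) mod ?n"] ik modn by fastforce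
        ultimately have "2 \<le> size (filter_mset (P (ws ! i)) (edges G))"
          using e1G e2G \<open>e1 \<noteq> e2\<close> by (intro size_ge2[of e1 _ e2]) auto
        then show ?thesis using hang[of "ws ! i"] ik by simp
      qed
    qed
  qed
qed


lemma cyc_split:
  assumes cyc: "has_cycle (induced G X)"
    and cl: "\<forall>e\<in>#edges G. set_uprod e \<subseteq> D \<or> set_uprod e \<inter> D = {}"
  shows "has_cycle (induced G (X \<inter> D)) \<or> has_cycle (induced G (X - D))"
  using cyc[unfolded has_cycle_alt]
proof (elim disjE exE conjE)
  fix v assume "Upair v v \<in># edges (induced G X)"
  then show ?thesis unfolding has_cycle_def by (cases "v \<in> D") auto
next
  fix u v assume uv: "u \<noteq> v" "2 \<le> count (edges (induced G X)) (Upair u v)"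
  then have uvX: "u \<in> X" "v \<in> X" and c: "2 \<le> count (edges G) (Upair u v)" by (auto split: if_splits)
  then have "Upair u v \<in># edges G" by (metis count_eq_zero_iff not_numeral_le_zero)
  then have "(u \<in> D \<and> v \<in> D) \<or> (u \<notin> D \<and> v \<notin> D)" using cl by auto
  then show ?thesis
  proof
    assume "u \<in> D \<and> v \<in> D"
    then have "2 \<le> count (edges (induced G (X \<inter> D))) (Upair u v)" using uvX c by simp
    then show ?thesis using uv(1) unfolding has_cycle_def by blast
  next
    assume "u \<notin> D \<and> v \<notin> D"
    then have "2 \<le> count (edges (induced G (X - D))) (Upair u v)" using uvX c by simp
    then show ?thesis using uv(1) unfolding has_cycle_def by blast
  qed
next
  fix vs assume cl2: "cyc_list vs (edges (induced G X))" and sv: "set vs \<subseteq> verts (induced G X)"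
  let ?n = "length vs"
  have n3: "?n \<ge> 3" using cl2 by (simp add: cyc_list_def)
  have edge: "Upair (vs ! i) (vs ! ((i + 1) mod ?n)) \<in># edges (induced G X)" if "i < ?n" for i
    using cl2 that by (simp add: cyc_list_def)
  have modn: "(i + 1) mod ?n < ?n" for i using n3 by (intro mod_less_divisor) linarith
  have same: "i < ?n \<Longrightarrow> (vs ! i \<in> D \<longleftrightarrow> vs ! 0 \<in> D)" for i
  proof (induction i)
    case 0 then show ?case by simp
  next
    case (Suc i)
    then have "(i + 1) mod ?n = Suc i" by simp
    then have "Upair (vs ! i) (vs ! Suc i) \<in># edges G" using edge[of i] Suc.prems by simp
    then have "(vs ! i \<in> D \<longleftrightarrow> vs ! Suc i \<in> D)" using cl by auto
    then show ?case using Suc by simp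
  qed
  have allin: "\<forall>i<?n. vs ! i \<in> D \<longleftrightarrow> vs ! 0 \<in> D" using same by blast
  show ?thesis
  proof (cases "vs ! 0 \<in> D")
    case True
    have "cyc_list vs (edges (induced G (X \<inter> D)))" unfolding cyc_list_def
    proof (intro conjI allI impI)
      fix i assume i: "i < ?n"
      then show "Upair (vs ! i) (vs ! ((i + 1) mod ?n)) \<in># edges (induced G (X \<inter> D))"
        using edge[OF i] allin True modn[of i] by auto
    qed (use cl2 in \<open>auto simp: cyc_list_def\<close>)
    moreover have "set vs \<subseteq> verts (induced G (X \<inter> D))" using sv allin True
      by (auto simp: in_set_conv_nth)
    ultimately show ?thesis unfolding has_cycle_alt by blast
  next
    case False
    have "cyc_list vs (edges (induced G (X - D)))" unfolding cyc_list_def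
    proof (intro conjI allI impI)
      fix i assume i: "i < ?n"
      then show "Upair (vs ! i) (vs ! ((i + 1) mod ?n)) \<in># edges (induced G (X - D))"
        using edge[OF i] allin False modn[of i] by auto
    qed (use cl2 in \<open>auto simp: cyc_list_def\<close>)
    moreover have "set vs \<subseteq> verts (induced G (X - D))" using sv allin False
      by (auto simp: in_set_conv_nth)
    ultimately show ?thesis unfolding has_cycle_alt by blast
  qed
qed

lemma comp_closed: "\<forall>e\<in>#edges G. set_uprod e \<subseteq> component G v \<or> set_uprod e \<inter> component G v = {}"
proof
  fix e assume e: "e \<in># edges G"
  obtain a b where ab: "e = Upair a b" by (cases e)
  have "Upair b a = Upair a b" by simp
  then have "Upair b a \<in># edges G" using e ab by metis
  then have "(a, b) \<in> adj_rel G" "(b, a) \<in> adj_rel G" using e ab by (auto simp: adj_rel_def)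
  then have "a \<in> component G v \<longleftrightarrow> b \<in> component G v"
    unfolding component_def by (meson mem_Collect_eq rtrancl.rtrancl_into_rtrancl)
  then show "set_uprod e \<subseteq> component G v \<or> set_uprod e \<inter> component G v = {}" using ab by auto
qed

lemma comp_mono:
  assumes "\<And>e. e \<in># edges H1 \<Longrightarrow> e \<in># edges H2"
  shows "component H1 v \<subseteq> component H2 v"
proof -
  have "adj_rel H1 \<subseteq> adj_rel H2" using assms by (auto simp: adj_rel_def)
  then show ?thesis unfolding component_def using rtrancl_mono by blast
qed

lemma e_between_mono:
  assumes "edges G1 \<subseteq># edges G2" "X1 \<subseteq> X2" "Y1 \<subseteq> Y2"
  shows "e_between G1 X1 Y1 \<le> e_between G2 X2 Y2"
  unfolding e_between_def
  by (rule size_mset_mono, rule filter_mset_mono_strong[OF assms(1)]) (use assms(2,3) in blast)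


lemma fvc_cycle_G:
  assumes "mgraph G" "is_fvc G C F" "has_cycle (induced G X)" "X \<inter> C = {}"
  shows "has_cycle (induced G (X - F))"
  using fvc_cycle[OF assms(1,2) _ _ assms(3,4)] by simp

lemma lower_bound:
  assumes G: "mgraph G" and ant: "is_antler G C F"
  shows "card C + fvs (del_verts G (C \<union> F)) \<le> fvs G"
proof -
  let ?K = "C \<union> F" and ?V = "verts G"
  have fin: "finite ?V" using G by (simp add: mgraph_def)
  have antC: "card C \<le> fvs (induced G ?K)" using ant by (simp add: is_antler_def)
  obtain X where X: "is_fvs G X" "card X = fvs G" using fvs_ex[OF G] by blast
  have XV: "X \<subseteq> ?V" and acX: "\<not> has_cycle (induced G (?V - X))"
    using X(1) by (simp_all add: is_fvs_def acyclic_mg_def del_verts_eq)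
  have "is_fvs (induced G ?K) (X \<inter> ?K)"
    unfolding is_fvs_def acyclic_mg_def del_verts_eq
  proof (intro conjI notI)
    show "X \<inter> ?K \<subseteq> verts (induced G ?K)" using XV by auto
  next
    assume "has_cycle (induced (induced G ?K) (verts (induced G ?K) - X \<inter> ?K))"
    then have "has_cycle (induced G (?V - X))" by simp (erule cyc_induced_mono, blast)
    then show False using acX by simp
  qed
  then have 1: "card C \<le> card (X \<inter> ?K)" using fvs_le[OF mgraph_induced[OF G]] antC order_trans by blast
  have "is_fvs (del_verts G ?K) (X - ?K)"
    unfolding is_fvs_def acyclic_mg_def del_verts_eq
  proof (intro conjI notI)
    show "X - ?K \<subseteq> verts (induced G (?V - ?K))" using XV by auto
  next
    assume "has_cycle (induced (induced G (?V - ?K)) (verts (induced G (?V - ?K)) - (X - ?K)))"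
    then have "has_cycle (induced G (?V - X))" by simp (erule cyc_induced_mono, blast)
    then show False using acX by simp
  qed
  then have 2: "fvs (del_verts G ?K) \<le> card (X - ?K)"
    unfolding del_verts_eq by (rule fvs_le[OF mgraph_induced[OF G]])
  have "card X = card (X \<inter> ?K) + card (X - ?K)"
    using card_Int_Diff finite_subset[OF XV fin] by blast
  then show ?thesis using 1 2 X(2) by linarith
qed

lemma part1:
  assumes G: "mgraph G" and ant: "is_antler G C F" and S': "is_min_fvs (del_verts G (C \<union> F)) S'"
  shows "is_min_fvs G (C \<union> S')"
proof -
  let ?K = "C \<union> F" and ?V = "verts G"
  have fin: "finite ?V" using G by (simp add: mgraph_def)
  have fvc: "is_fvc G C F" using ant by (simp add: is_antler_def)
  have CV: "C \<subseteq> ?V" using fvc by (simp add: is_fvc_def)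
  have S'V: "S' \<subseteq> ?V - ?K" and acS: "\<not> has_cycle (induced G ((?V - ?K) - S'))"
    and cS: "card S' = fvs (del_verts G ?K)"
    using S' by (auto simp: is_min_fvs_def is_fvs_def acyclic_mg_def del_verts_eq Int_absorb1 Diff_subset)
  have fv: "is_fvs G (C \<union> S')"
    unfolding is_fvs_def acyclic_mg_def del_verts_eq
  proof (intro conjI notI)
    show "C \<union> S' \<subseteq> ?V" using CV S'V by auto
  next
    assume "has_cycle (induced G (?V - (C \<union> S')))"
    then have "has_cycle (induced G (?V - (C \<union> S') - F))" by (rule fvc_cycle_G[OF G fvc]) auto
    then have "has_cycle (induced G ((?V - ?K) - S'))" by (rule cyc_induced_mono) auto
    then show False using acS by simp
  qed
  have "card (C \<union> S') = card C + card S'"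
    using CV S'V fin by (intro card_Un_disjoint) (auto intro: finite_subset)
  then have "fvs G \<ge> card (C \<union> S')" using lower_bound[OF G ant] cS by simp
  moreover have "fvs G \<le> card (C \<union> S')" using fvs_le[OF G fv] .
  ultimately show ?thesis using fv by (simp add: is_min_fvs_def)
qed


lemma part2:
  assumes G: "mgraph G" and ant: "is_antler G C F" and za: "is_z_antler G z Ch Fh"
  shows "\<exists>C' F'. is_z_antler (del_verts G (C \<union> F)) z C' F'
               \<and> C' \<union> F' = (Ch \<union> Fh) \<inter> verts (del_verts G (C \<union> F))
               \<and> int (card C') = int (card Ch) - int (card ((Ch \<union> Fh) \<inter> C))"
proof -
  let ?K = "C \<union> F" and ?V = "verts G" and ?A = "Ch \<union> Fh"
  define G' where "G' = del_verts G ?K"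
  have G'eq: "G' = induced G (?V - ?K)" by (simp add: G'_def del_verts_eq)
  have mG': "mgraph G'" using G by (simp add: G'eq mgraph_induced)
  have fin: "finite ?V" using G by (simp add: mgraph_def)
  have fvc: "is_fvc G C F" and antC: "card C \<le> fvs (induced G ?K)" using ant by (simp_all add: is_antler_def)
  have fvc2: "is_fvc G Ch Fh" and antCh: "card Ch \<le> fvs (induced G ?A)"
    using za by (simp_all add: is_z_antler_def is_antler_def)
  obtain H where Hc: "is_certificate_order (induced G ?A) Ch z H" using za by (auto simp: is_z_antler_def)
  have CV: "C \<subseteq> ?V" "F \<subseteq> ?V" using fvc by (auto simp: is_fvc_def)
  have ChV: "Ch \<subseteq> ?V" "Fh \<subseteq> ?V" "Ch \<inter> Fh = {}" "\<not> has_cycle (induced G Fh)"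
    using fvc2 by (auto simp: is_fvc_def acyclic_mg_def)
  have finC: "finite C" "finite Ch" using CV(1) ChV(1) fin finite_subset by blast+
  have mGK: "mgraph (induced G X)" for X using G by (rule mgraph_induced)
  have E1: "card (?A \<inter> C) \<le> card (Ch \<inter> ?K)"
  proof -
    let ?Z = "(Ch \<inter> ?K) \<union> (C - ?A)"
    have "is_fvs (induced G ?K) ?Z"
      unfolding is_fvs_def acyclic_mg_def del_verts_eq
    proof (intro conjI notI)
      show "?Z \<subseteq> verts (induced G ?K)" using ChV CV by auto
    next
      assume "has_cycle (induced (induced G ?K) (verts (induced G ?K) - ?Z))"
      then have "has_cycle (induced G (?K \<inter> (?V \<inter> ?K - ?Z)))" by simp
      then have "has_cycle (induced G (?K \<inter> (?V \<inter> ?K - ?Z) - Fh))" by (rule fvc_cycle_G[OF G fvc2]) auto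
      then have "has_cycle (induced G (?K \<inter> (?V \<inter> ?K - ?Z) - Fh - F))" by (rule fvc_cycle_G[OF G fvc]) auto
      moreover have "?K \<inter> (?V \<inter> ?K - ?Z) - Fh - F = {}" by auto
      ultimately show False using no_cycle_empty by metis
    qed
    then have "card C \<le> card ?Z" using fvs_le[OF mGK] antC order_trans by blast
    also have "\<dots> \<le> card (Ch \<inter> ?K) + card (C - ?A)" by (rule card_Un_le)
    finally have "card C \<le> card (Ch \<inter> ?K) + card (C - ?A)" .
    moreover have "card C = card (C \<inter> ?A) + card (C - ?A)" using card_Int_Diff finC by blast
    ultimately show ?thesis by (simp add: Int_commute)
  qed
  have E2: "card (Ch \<inter> ?K) \<le> card (?A \<inter> C)"
  proof -
    let ?Z = "(Ch - ?K) \<union> (C \<inter> ?A)"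
    have "is_fvs (induced G ?A) ?Z"
      unfolding is_fvs_def acyclic_mg_def del_verts_eq
    proof (intro conjI notI)
      show "?Z \<subseteq> verts (induced G ?A)" using ChV CV by auto
    next
      assume "has_cycle (induced (induced G ?A) (verts (induced G ?A) - ?Z))"
      then have "has_cycle (induced G (?A \<inter> (?V \<inter> ?A - ?Z)))" by simp
      then have "has_cycle (induced G (?A \<inter> (?V \<inter> ?A - ?Z) - F))" by (rule fvc_cycle_G[OF G fvc]) auto
      then have "has_cycle (induced G (?A \<inter> (?V \<inter> ?A - ?Z) - F - Fh))" by (rule fvc_cycle_G[OF G fvc2]) auto
      moreover have "?A \<inter> (?V \<inter> ?A - ?Z) - F - Fh = {}" by auto
      ultimately show False using no_cycle_empty by metis
    qed
    then have "card Ch \<le> card ?Z" using fvs_le[OF mGK] antCh order_trans by blast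
    also have "\<dots> \<le> card (Ch - ?K) + card (C \<inter> ?A)" by (rule card_Un_le)
    finally have "card Ch \<le> card (Ch - ?K) + card (C \<inter> ?A)" .
    moreover have "card Ch = card (Ch \<inter> ?K) + card (Ch - ?K)" using card_Int_Diff finC by blast
    ultimately show ?thesis by (simp add: Int_commute)
  qed
  define C' where "C' = Ch - ?K"
  define F' where "F' = Fh - ?K"
  have cardC': "card C' = card Ch - card (?A \<inter> C)" and cardC'2: "card C' + card (?A \<inter> C) = card Ch"
    using E1 E2 card_Int_Diff[OF finC(2), of ?K] unfolding C'_def by linarith+
  have vG': "verts G' = ?V - ?K" by (auto simp: G'eq)
  have W: "C' \<union> F' = ?A \<inter> verts G'" using ChV unfolding vG' C'_def F'_def by auto
  have GG': "edges G' \<subseteq># edges G" by (simp add: G'eq)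
  have fvc': "is_fvc G' C' F'"
    unfolding is_fvc_def
  proof (intro conjI ballI)
    show "C' \<subseteq> verts G'" "F' \<subseteq> verts G'" "C' \<inter> F' = {}"
      using ChV unfolding vG' C'_def F'_def by auto
    show "acyclic_mg (induced G' F')"
    proof -
      have "\<not> has_cycle (induced G' F')"
      proof
        assume "has_cycle (induced G' F')"
        then have "has_cycle (induced G Fh)" unfolding G'eq by simp (erule cyc_induced_mono, auto simp: F'_def)
        then show False using ChV(4) by simp
      qed
      then show ?thesis by (simp add: acyclic_mg_def)
    qed
  next
    fix v assume v: "v \<in> F'"
    have "component (induced G' F') v \<subseteq> component (induced G Fh) v"
      by (rule comp_mono) (auto simp: G'eq F'_def)
    then have "e_between G' (component (induced G' F') v) (verts G' - (C' \<union> F'))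
        \<le> e_between G (component (induced G Fh) v) (?V - (Ch \<union> Fh))"
      by (intro e_between_mono GG') (auto simp: vG' C'_def F'_def)
    also have "\<dots> \<le> 1" using fvc2 v unfolding is_fvc_def F'_def by blast
    finally show "e_between G' (component (induced G' F') v) (verts G' - (C' \<union> F')) \<le> 1" .
  qed
  have antC': "card C' \<le> fvs (induced G' (C' \<union> F'))"
  proof -
    obtain Y where Y: "is_fvs (induced G' (C' \<union> F')) Y" "card Y = fvs (induced G' (C' \<union> F'))"
      using fvs_ex[OF mgraph_induced[OF mG']] by blast
    have YV: "Y \<subseteq> verts (induced G' (C' \<union> F'))"
      and acY: "\<not> has_cycle (induced (induced G' (C' \<union> F')) (verts (induced G' (C' \<union> F')) - Y))"
      using Y(1) by (simp_all add: is_fvs_def acyclic_mg_def del_verts_eq)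
    let ?Z = "Y \<union> (C \<inter> ?A)"
    have "is_fvs (induced G ?A) ?Z"
      unfolding is_fvs_def acyclic_mg_def del_verts_eq
    proof (intro conjI notI)
      show "?Z \<subseteq> verts (induced G ?A)" using YV CV unfolding G'eq by (auto simp: C'_def F'_def)
    next
      assume "has_cycle (induced (induced G ?A) (verts (induced G ?A) - ?Z))"
      then have "has_cycle (induced G (?A \<inter> (?V \<inter> ?A - ?Z)))" by simp
      then have "has_cycle (induced G (?A \<inter> (?V \<inter> ?A - ?Z) - F))" by (rule fvc_cycle_G[OF G fvc]) auto
      then have "has_cycle (induced (induced G' (C' \<union> F')) (verts (induced G' (C' \<union> F')) - Y))"
        unfolding G'eq by simp (erule cyc_induced_mono, auto simp: C'_def F'_def)
      then show False using acY by simp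
    qed
    then have "card Ch \<le> card ?Z" using fvs_le[OF mGK] antCh order_trans by blast
    also have "\<dots> \<le> card Y + card (C \<inter> ?A)" by (rule card_Un_le)
    finally show ?thesis using cardC'2 Y(2) by (simp add: Int_commute)
  qed
  have sub: "subgraph H (induced G ?A)" and mf: "is_min_fvs H Ch"
    and ord: "\<forall>v\<in>verts H. let H' = induced H (component H v) in
        fvs H' = card (Ch \<inter> verts H') \<and> card (Ch \<inter> verts H') \<le> z"
    using Hc by (simp_all add: is_certificate_order_def is_certificate_def)
  have mH: "mgraph H" and HV: "verts H \<subseteq> ?V \<inter> ?A"
    and HE: "edges H \<subseteq># filter_mset (\<lambda>e. set_uprod e \<subseteq> ?A) (edges G)"
    using sub by (simp_all add: subgraph_def)
  have HE': "edges H \<subseteq># edges G" using HE multiset_filter_subset subset_mset.order_trans by blast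
  have HV': "verts H \<subseteq> ?V" using HV by blast
  have ChH: "Ch \<subseteq> verts H" and acH: "\<not> has_cycle (induced H (verts H - Ch))" and fH: "card Ch = fvs H"
    using mf by (simp_all add: is_min_fvs_def is_fvs_def acyclic_mg_def del_verts_eq)
  define H2 where "H2 = induced H (verts H - ?K)"
  have mH2: "mgraph H2" unfolding H2_def using mH by (rule mgraph_induced)
  have vH2: "verts H2 = verts H - ?K" unfolding H2_def by auto
  have eH2: "e \<in># edges H2 \<Longrightarrow> e \<in># edges H" for e unfolding H2_def by simp
  have sub2: "subgraph H2 (induced G' (C' \<union> F'))"
    unfolding subgraph_def
  proof (intro conjI)
    show "mgraph H2" by (rule mH2)
    show "verts H2 \<subseteq> verts (induced G' (C' \<union> F'))"
      using HV unfolding vH2 G'eq by (auto simp: C'_def F'_def)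
    have "edges H2 \<subseteq># filter_mset (\<lambda>e. set_uprod e \<subseteq> verts H - ?K) (filter_mset (\<lambda>e. set_uprod e \<subseteq> ?A) (edges G))"
      unfolding H2_def edges_induced by (rule multiset_filter_mono[OF HE])
    also have "\<dots> \<subseteq># edges (induced G' (C' \<union> F'))"
      unfolding G'eq induced_induced edges_induced filter_filter_mset
      by (rule filter_mset_mono_strong[OF subset_mset.order_refl]) (use HV' in \<open>auto simp: C'_def F'_def\<close>)
    finally show "edges H2 \<subseteq># edges (induced G' (C' \<union> F'))" .
  qed
  have fvsC': "is_fvs H2 C'"
    unfolding is_fvs_def acyclic_mg_def del_verts_eq
  proof (intro conjI notI)
    show "C' \<subseteq> verts H2" using ChH unfolding vH2 C'_def by auto
  next
    assume "has_cycle (induced H2 (verts H2 - C'))"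
    then have "has_cycle (induced H (verts H - Ch))" unfolding H2_def
      by simp (erule cyc_induced_mono, auto simp: C'_def)
    then show False using acH by simp
  qed
  have C'H2: "C' \<subseteq> verts H2" and acC': "\<not> has_cycle (induced H2 (verts H2 - C'))"
    using fvsC' by (simp_all add: is_fvs_def acyclic_mg_def del_verts_eq)
  have mfC': "is_min_fvs H2 C'"
  proof -
    obtain Y where Y: "is_fvs H2 Y" "card Y = fvs H2" using fvs_ex[OF mH2] by blast
    have YV: "Y \<subseteq> verts H2" and acY: "\<not> has_cycle (induced H2 (verts H2 - Y))"
      using Y(1) by (simp_all add: is_fvs_def acyclic_mg_def del_verts_eq)
    let ?Z = "Y \<union> (C \<inter> verts H)"
    have "is_fvs H ?Z"
      unfolding is_fvs_def acyclic_mg_def del_verts_eq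
    proof (intro conjI notI)
      show "?Z \<subseteq> verts H" using YV vH2 by auto
    next
      assume "has_cycle (induced H (verts H - ?Z))"
      then have "has_cycle (induced H (verts H - ?Z - F))"
        by (rule fvc_cycle[OF G fvc HV' HE']) auto
      then have "has_cycle (induced H2 (verts H2 - Y))" unfolding vH2 unfolding H2_def
        by simp (erule cyc_induced_mono, auto)
      then show False using acY by simp
    qed
    then have "card Ch \<le> card ?Z" using fvs_le[OF mH] fH by simp
    also have "\<dots> \<le> card Y + card (C \<inter> verts H)" by (rule card_Un_le)
    also have "card (C \<inter> verts H) \<le> card (?A \<inter> C)"
      using HV finC by (intro card_mono) auto
    finally have "card C' \<le> fvs H2" using cardC'2 Y(2) by linarith
    moreover have "fvs H2 \<le> card C'" by (rule fvs_le[OF mH2 fvsC'])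
    ultimately show ?thesis using fvsC' by (simp add: is_min_fvs_def)
  qed
  have cC': "card C' = fvs H2" using mfC' by (simp add: is_min_fvs_def)
  have ord2: "\<forall>v\<in>verts H2. let H' = induced H2 (component H2 v) in
        fvs H' = card (C' \<inter> verts H') \<and> card (C' \<inter> verts H') \<le> z"
    unfolding Let_def
  proof (intro ballI conjI)
    fix v assume v: "v \<in> verts H2"
    define D where "D = component H2 v"
    have vH: "v \<in> verts H" using v vH2 by auto
    have ordv: "card (Ch \<inter> verts (induced H (component H v))) \<le> z"
      using ord vH by (simp add: Let_def)
    have Dsub: "D \<subseteq> component H v" unfolding D_def by (rule comp_mono) (rule eH2)
    have "card (C' \<inter> verts (induced H2 D)) \<le> card (Ch \<inter> verts (induced H (component H v)))"
      using finC(2) Dsub vH2 by (intro card_mono) (auto simp: C'_def)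
    then show "card (C' \<inter> verts (induced H2 (component H2 v))) \<le> z" using ordv unfolding D_def by linarith
    have XcD: "C' \<inter> verts (induced H2 D) = C' \<inter> D" using C'H2 by auto
    have mH': "mgraph (induced H2 D)" using mH2 by (rule mgraph_induced)
    have fX: "is_fvs (induced H2 D) (C' \<inter> D)"
      unfolding is_fvs_def acyclic_mg_def del_verts_eq
    proof (intro conjI notI)
      show "C' \<inter> D \<subseteq> verts (induced H2 D)" using C'H2 by auto
    next
      assume "has_cycle (induced (induced H2 D) (verts (induced H2 D) - C' \<inter> D))"
      then have "has_cycle (induced H2 (verts H2 - C'))" by simp (erule cyc_induced_mono, auto)
      then show False using acC' by simp
    qed
    obtain Y where Y: "is_fvs (induced H2 D) Y" "card Y = fvs (induced H2 D)"
      using fvs_ex[OF mH'] by blast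
    have YV: "Y \<subseteq> verts H2 \<inter> D" and acY: "\<not> has_cycle (induced H2 (D \<inter> (verts H2 \<inter> D - Y)))"
      using Y(1) by (simp_all add: is_fvs_def acyclic_mg_def del_verts_eq)
    let ?Z = "(C' - D) \<union> Y"
    have "is_fvs H2 ?Z"
      unfolding is_fvs_def acyclic_mg_def del_verts_eq
    proof (intro conjI notI)
      show "?Z \<subseteq> verts H2" using YV C'H2 by auto
    next
      assume "has_cycle (induced H2 (verts H2 - ?Z))"
      then have "has_cycle (induced H2 ((verts H2 - ?Z) \<inter> D)) \<or> has_cycle (induced H2 ((verts H2 - ?Z) - D))"
        using comp_closed[of H2 v] unfolding D_def by (rule cyc_split)
      then show False
      proof
        assume "has_cycle (induced H2 ((verts H2 - ?Z) \<inter> D))"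
        then have "has_cycle (induced H2 (D \<inter> (verts H2 \<inter> D - Y)))" by (rule cyc_induced_mono) auto
        then show False using acY by simp
      next
        assume "has_cycle (induced H2 ((verts H2 - ?Z) - D))"
        then have "has_cycle (induced H2 (verts H2 - C'))" by (rule cyc_induced_mono) auto
        then show False using acC' by simp
      qed
    qed
    then have "card C' \<le> card ?Z" using fvs_le[OF mH2] cC' by simp
    also have "\<dots> \<le> card (C' - D) + card Y" by (rule card_Un_le)
    finally have "card C' \<le> card (C' - D) + card Y" .
    moreover have "card C' = card (C' \<inter> D) + card (C' - D)"
      using finC(2) card_Int_Diff[of C' D] unfolding C'_def by blast
    ultimately have "card (C' \<inter> D) \<le> fvs (induced H2 D)" using Y(2) by linarith
    moreover have "fvs (induced H2 D) \<le> card (C' \<inter> D)" by (rule fvs_le[OF mH' fX])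
    ultimately show "fvs (induced H2 (component H2 v)) = card (C' \<inter> verts (induced H2 (component H2 v)))"
      using XcD unfolding D_def by (metis le_antisym)
  qed
  have "is_z_antler G' z C' F'"
    unfolding is_z_antler_def is_antler_def is_certificate_order_def is_certificate_def
    using fvc' antC' sub2 mfC' ord2 by blast
  moreover have "int (card C') = int (card Ch) - int (card (?A \<inter> C))" using cardC'2 by linarith
  ultimately show ?thesis using W unfolding G'_def by blast
qed


theorem lemma20:
  fixes G :: "'a mgraph" and C F :: "'a set"
  assumes "mgraph G" and "is_antler G C F"
  shows "(\<forall>S'. is_min_fvs (del_verts G (C \<union> F)) S' \<longrightarrow> is_min_fvs G (C \<union> S'))
       \<and> (\<forall>(z::nat) Ch Fh. is_z_antler G z Ch Fh \<longrightarrow>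
            (\<exists>C' F'. is_z_antler (del_verts G (C \<union> F)) z C' F'
               \<and> C' \<union> F' = (Ch \<union> Fh) \<inter> verts (del_verts G (C \<union> F))
               \<and> int (card C') = int (card Ch) - int (card ((Ch \<union> Fh) \<inter> C))))"
    using part1[OF assms] part2[OF assms] by blast

end
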